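(* Let $Y$ be a nonnegative random variable with Laplace transform $L(s)=\mathbb{E}e^{-sY}$, $s\ge 0$. Suppose that for every $n\in\mathbb{N}$ there is a function $g_n$ with the following properties: (i) $g_n$ is the Laplace transform of a probability distribution on $[0,\infty)$; (ii) $g_n$ is a continuous, strictly decreasing bijection of $[0,\infty)$ onto $(0,1]$, with inverse function $g_n^{-1}$; (iii) $L(s)=\bigl[L(-\log g_n(s))\bigr]^n$ for all $s\ge 0$. Let $h$ be the Laplace transform of a nonnegative random variable and suppose there is $a>0$ with $$\sup_{s>0}\frac{|h(s)-L(s)|}{s^a}<\infty .$$ Suppose further that $$\sup_{s>0}\frac{n\,s^a}{\bigl|g_n^{-1}(e^{-s})\bigr|^a}\longrightarrow 0\quad (n\to\infty).$$ For each $n$, let $\tilde X_1(n),\dots,\tilde X_n(n)$ be i.i.d. random variables with Laplace transform $s\mapsto h(-\log g_n(s))$ (the $g_n$-normalizations of i.i.d. random variables $X_1,X_2,\dots$ with Laplace transform $h$; this function is assumed to be a Laplace transform of a probability distribution). Then $$\sum_{j=1}^n \tilde X_j(n)\xrightarrow{d} Y\quad (n\to\infty).$$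
   Context: A nonnegative random variable with Laplace transform $L$ is called casual stable if for every $n\in\mathbb{N}$ there is the Laplace transform $g_n$ of a probability distribution on $[0,\infty)$ such that $L(s)=[L(-\log g_n(s))]^n$ for all $s\ge0$. Given a nonnegative random variable $X$ with Laplace transform $h$, its $g_n$-normalization is a random variable $\tilde X$ with Laplace transform $h(-\log g_n(s))$ (interpretation: each unit of $X$ is replaced by an independent random contribution with Laplace transform $g_n$). *)

theory Defs
  imports "HOL-Probability.Probability"
begin

definition is_laplace_transform :: "(real \<Rightarrow> real) \<Rightarrow> bool" where
  "is_laplace_transform \<phi> \<longleftrightarrow>
     (\<exists>\<mu>::real measure. prob_space \<mu> \<and> sets \<mu> = sets borel \<and> (AE x in \<mu>. 0 \<le> x) \<and>
        (\<forall>s\<ge>0. \<phi> s = (\<integral>x. exp (- (s * x)) \<partial>\<mu>)))"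

end

theory Submission imports Defs "HOL-Analysis.Weierstrass_Theorems" begin

lemma lt_int:
  fixes X :: "'a \<Rightarrow> real" and u :: real
  assumes "prob_space \<mu>" "X \<in> borel_measurable \<mu>" "AE x in \<mu>. 0 \<le> X x" "u \<ge> 0"
  shows "integrable \<mu> (\<lambda>x. exp (- (u * X x)))"
    "0 \<le> (\<integral>x. exp (- (u * X x)) \<partial>\<mu>)" "(\<integral>x. exp (- (u * X x)) \<partial>\<mu>) \<le> 1"
proof -
  interpret prob_space \<mu> by fact
  have ae: "AE x in \<mu>. norm (exp (- (u * X x))) \<le> 1"
    using assms(3)
  proof eventually_elim
    case (elim x)
    then have "0 \<le> u * X x" using assms(4) by (metis mult_nonneg_nonneg)
    then show ?case by simp
  qed
  show i: "integrable \<mu> (\<lambda>x. exp (- (u * X x)))"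
    by (rule integrable_const_bound[OF ae]) (use assms(2) in simp)
  show "0 \<le> (\<integral>x. exp (- (u * X x)) \<partial>\<mu>)" by simp
  have "(\<integral>x. exp (- (u * X x)) \<partial>\<mu>) \<le> (\<integral>x. 1 \<partial>\<mu>)"
    by (rule integral_mono_AE[OF i]) (use ae in auto)
  then show "(\<integral>x. exp (- (u * X x)) \<partial>\<mu>) \<le> 1" by (simp add: prob_space)
qed

lemma abs_int_le:
  fixes f :: "'a \<Rightarrow> real"
  assumes "prob_space N" "integrable N f" "AE x in N. \<bar>f x\<bar> \<le> B"
  shows "\<bar>\<integral>x. f x \<partial>N\<bar> \<le> B"
proof -
  interpret prob_space N by fact
  have "\<bar>\<integral>x. f x \<partial>N\<bar> \<le> (\<integral>x. \<bar>f x\<bar> \<partial>N)" using integral_norm_bound[of N f] by simp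
  also have "\<dots> \<le> (\<integral>x. B \<partial>N)"
    by (rule integral_mono_AE) (use assms in auto)
  finally show ?thesis by (simp add: prob_space)
qed

lemma pow_diff_le:
  fixes a b :: real
  assumes "0 \<le> a" "a \<le> 1" "0 \<le> b" "b \<le> 1"
  shows "\<bar>a ^ n - b ^ n\<bar> \<le> real n * \<bar>a - b\<bar>"
proof (induction n)
  case 0 then show ?case by simp
next
  case (Suc n)
  have "a ^ Suc n - b ^ Suc n = a * (a ^ n - b ^ n) + b ^ n * (a - b)" by (simp add: algebra_simps)
  then have "\<bar>a ^ Suc n - b ^ Suc n\<bar> \<le> a * \<bar>a ^ n - b ^ n\<bar> + b ^ n * \<bar>a - b\<bar>"
    using assms by (simp add: abs_mult abs_triangle_ineq order_trans[OF abs_triangle_ineq])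
  also have "\<dots> \<le> 1 * (real n * \<bar>a - b\<bar>) + 1 * \<bar>a - b\<bar>"
    using assms Suc by (intro add_mono mult_mono) (auto simp: power_le_one)
  finally show ?case by (simp add: algebra_simps)
qed

lemma moment_conv:
  fixes N :: "nat \<Rightarrow> 'a measure" and M0 :: "'b measure" and Z :: "nat \<Rightarrow> 'a \<Rightarrow> real"
    and Z0 :: "'b \<Rightarrow> real" and \<phi> :: "real \<Rightarrow> real"
  assumes N: "\<And>n. prob_space (N n)" and M0: "prob_space M0"
    and Zm: "\<And>n. Z n \<in> borel_measurable (N n)" and Z0m: "Z0 \<in> borel_measurable M0"
    and Zr: "\<And>n. AE \<omega> in N n. Z n \<omega> \<in> {0..1}" and Z0r: "AE \<omega> in M0. Z0 \<omega> \<in> {0..1}"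
    and mom: "\<And>k. (\<lambda>n. \<integral>\<omega>. Z n \<omega> ^ k \<partial>N n) \<longlonglongrightarrow> (\<integral>\<omega>. Z0 \<omega> ^ k \<partial>M0)"
    and phic: "continuous_on UNIV \<phi>" and phib: "\<And>x. \<bar>\<phi> x\<bar> \<le> B"
  shows "(\<lambda>n. \<integral>\<omega>. \<phi> (Z n \<omega>) \<partial>N n) \<longlonglongrightarrow> (\<integral>\<omega>. \<phi> (Z0 \<omega>) \<partial>M0)"
proof (rule tendstoI)
  fix e :: real assume e: "0 < e"
  have phim: "\<phi> \<in> borel_measurable borel" using phic by (rule borel_measurable_continuous_onI)
  obtain p where "real_polynomial_function p" and pa: "\<And>x. x \<in> {0..1} \<Longrightarrow> \<bar>\<phi> x - p x\<bar> < e/3"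
    using Stone_Weierstrass_real_polynomial_function[of "{0..1::real}" \<phi> "e/3"] e
      continuous_on_subset[OF phic] by auto
  then obtain c m where p: "p = (\<lambda>x. \<Sum>i\<le>m. c i * x ^ i)"
    using real_polynomial_function_iff_sum by blast
  have intpow: "integrable Q (\<lambda>\<omega>. W \<omega> ^ i)"
    if "prob_space Q" "W \<in> borel_measurable Q" "AE \<omega> in Q. W \<omega> \<in> {0..1}" for Q :: "'c measure" and W :: "'c \<Rightarrow> real" and i :: nat
  proof -
    interpret prob_space Q by fact
    show ?thesis
    proof (rule integrable_const_bound[where B=1])
      show "AE x in Q. norm (W x ^ i) \<le> 1"
        using that(3) by eventually_elim (auto simp: power_le_one)
    qed (use that in simp)
  qed
  have intp: "integrable Q (\<lambda>\<omega>. p (W \<omega>))" "(\<integral>\<omega>. p (W \<omega>) \<partial>Q) = (\<Sum>i\<le>m. c i * \<integral>\<omega>. W \<omega> ^ i \<partial>Q)"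
    if "prob_space Q" "W \<in> borel_measurable Q" "AE \<omega> in Q. W \<omega> \<in> {0..1}" for Q :: "'c measure" and W :: "'c \<Rightarrow> real"
    using intpow[OF that] unfolding p by (auto simp: integral_sum)
  have intphi: "integrable Q (\<lambda>\<omega>. \<phi> (W \<omega>))"
    if "prob_space Q" "W \<in> borel_measurable Q" for Q :: "'c measure" and W :: "'c \<Rightarrow> real"
  proof -
    interpret prob_space Q by fact
    show ?thesis
      by (rule integrable_const_bound[where B=B]) (use that phib phim in auto)
  qed
  have close: "\<bar>(\<integral>\<omega>. \<phi> (W \<omega>) \<partial>Q) - (\<integral>\<omega>. p (W \<omega>) \<partial>Q)\<bar> \<le> e/3"
    if "prob_space Q" "W \<in> borel_measurable Q" "AE \<omega> in Q. W \<omega> \<in> {0..1}" for Q :: "'c measure" and W :: "'c \<Rightarrow> real"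
  proof -
    have "(\<integral>\<omega>. \<phi> (W \<omega>) \<partial>Q) - (\<integral>\<omega>. p (W \<omega>) \<partial>Q) = (\<integral>\<omega>. \<phi> (W \<omega>) - p (W \<omega>) \<partial>Q)"
      using intphi[OF that(1,2)] intp(1)[OF that] by simp
    also have "\<bar>\<dots>\<bar> \<le> e/3"
    proof (rule abs_int_le[OF that(1)])
      show "integrable Q (\<lambda>\<omega>. \<phi> (W \<omega>) - p (W \<omega>))"
        using intphi[OF that(1,2)] intp(1)[OF that] by simp
      show "AE \<omega> in Q. \<bar>\<phi> (W \<omega>) - p (W \<omega>)\<bar> \<le> e / 3"
        using that(3) by eventually_elim (use pa in \<open>auto intro: less_imp_le\<close>)
    qed
    finally show ?thesis .
  qed
  have P: "(\<lambda>n. \<integral>\<omega>. p (Z n \<omega>) \<partial>N n) \<longlonglongrightarrow> (\<integral>\<omega>. p (Z0 \<omega>) \<partial>M0)"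
    unfolding intp(2)[OF N Zm Zr] intp(2)[OF M0 Z0m Z0r]
    by (intro tendsto_sum tendsto_mult_left mom)
  have "eventually (\<lambda>n. dist (\<integral>\<omega>. p (Z n \<omega>) \<partial>N n) (\<integral>\<omega>. p (Z0 \<omega>) \<partial>M0) < e/3) sequentially"
    using tendstoD[OF P, of "e/3"] e by simp
  then show "eventually (\<lambda>n. dist (\<integral>\<omega>. \<phi> (Z n \<omega>) \<partial>N n) (\<integral>\<omega>. \<phi> (Z0 \<omega>) \<partial>M0) < e) sequentially"
  proof eventually_elim
    case (elim n)
    with close[OF N Zm Zr, of n] close[OF M0 Z0m Z0r] show ?case
      by (simp add: dist_real_def) (smt (verit))
  qed
qed


lemma cts_step_bounds: "x < y \<Longrightarrow> 0 \<le> cts_step x y t \<and> cts_step x y t \<le> 1"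
  unfolding cts_step_def by (auto simp: divide_simps)

lemma cts_step_min: "x < y \<Longrightarrow> cts_step x y (min t y) = cts_step x y t"
  unfolding cts_step_def by (auto simp: min_def)

theorem mainTheorem1:
  fixes M :: "'b measure" and Y :: "'b \<Rightarrow> real" and L :: "real \<Rightarrow> real"
    and g :: "nat \<Rightarrow> real \<Rightarrow> real" and h :: "real \<Rightarrow> real" and a :: real
    and \<Omega> :: "nat \<Rightarrow> 'a measure" and Xt :: "nat \<Rightarrow> nat \<Rightarrow> 'a \<Rightarrow> real"
  assumes M: "prob_space M"
    and Y_meas: "Y \<in> borel_measurable M"
    and Y_nonneg: "AE \<omega> in M. 0 \<le> Y \<omega>"
    and L_def: "\<forall>s\<ge>0. L s = (\<integral>\<omega>. exp (- (s * Y \<omega>)) \<partial>M)"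
    and g_LT: "\<forall>n\<ge>1. is_laplace_transform (g n)"
    and g_cont: "\<forall>n\<ge>1. continuous_on {0..} (g n)"
    and g_decr: "\<forall>n\<ge>1. \<forall>x y. 0 \<le> x \<longrightarrow> x < y \<longrightarrow> g n y < g n x"
    and g_bij: "\<forall>n\<ge>1. bij_betw (g n) {0..} {0<..1}"
    and L_stable: "\<forall>n\<ge>1. \<forall>s\<ge>0. L s = (L (- ln (g n s))) ^ n"
    and h_LT: "is_laplace_transform h"
    and a_pos: "a > 0"
    and h_close: "(SUP s\<in>{0<..}. ereal (\<bar>h s - L s\<bar> / s powr a)) < \<infinity>"
    and g_growth: "(\<lambda>n. SUP s\<in>{0<..}. ereal (real n * s powr a
                      / \<bar>the_inv_into {0..} (g n) (exp (- s))\<bar> powr a)) \<longlonglongrightarrow> 0"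
    and \<Omega>_prob: "\<forall>n\<ge>1. prob_space (\<Omega> n)"
    and Xt_meas: "\<forall>n\<ge>1. \<forall>j\<in>{1..n}. Xt n j \<in> borel_measurable (\<Omega> n)"
    and Xt_indep: "\<forall>n\<ge>1. prob_space.indep_vars (\<Omega> n) (\<lambda>_. borel) (Xt n) {1..n}"
    and Xt_nonneg: "\<forall>n\<ge>1. \<forall>j\<in>{1..n}. AE \<omega> in \<Omega> n. 0 \<le> Xt n j \<omega>"
    and Xt_LT: "\<forall>n\<ge>1. \<forall>j\<in>{1..n}. \<forall>s\<ge>0.
                  (\<integral>\<omega>. exp (- (s * Xt n j \<omega>)) \<partial>\<Omega> n) = h (- ln (g n s))"
  shows "weak_conv_m (\<lambda>n. distr (\<Omega> n) borel (\<lambda>\<omega>. \<Sum>j\<in>{1..n}. Xt n j \<omega>))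
                     (distr M borel Y)"
proof -
  define S where "S = (\<lambda>n \<omega>. \<Sum>j\<in>{1..n}. Xt n j \<omega>)"
  have Smeas: "S n \<in> borel_measurable (\<Omega> n)" if "n \<ge> 1" for n
    unfolding S_def using Xt_meas that by (auto intro!: borel_measurable_sum)
  have Snn: "AE \<omega> in \<Omega> n. 0 \<le> S n \<omega>" if "n \<ge> 1" for n
  proof -
    have "AE \<omega> in \<Omega> n. \<forall>j\<in>{1..n}. 0 \<le> Xt n j \<omega>"
      using Xt_nonneg that by (subst AE_finite_all) auto
    then show ?thesis unfolding S_def by eventually_elim (auto intro: sum_nonneg)
  qed
  obtain \<mu> :: "real measure" where \<mu>: "prob_space \<mu>" "sets \<mu> = sets borel" "AE x in \<mu>. 0 \<le> x"
    "\<forall>s\<ge>0. h s = (\<integral>x. exp (- (s * x)) \<partial>\<mu>)"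
    using h_LT unfolding is_laplace_transform_def by blast
  have idm: "(\<lambda>x. x) \<in> borel_measurable \<mu>"
    using \<mu>(2) by (simp add: measurable_ident_sets)
  have hb: "0 \<le> h u \<and> h u \<le> 1" if "u \<ge> 0" for u
    using lt_int[OF \<mu>(1) idm \<mu>(3) that] \<mu>(4) that by simp
  have Lb: "0 \<le> L u \<and> L u \<le> 1" if "u \<ge> 0" for u
    using lt_int[OF M Y_meas Y_nonneg that] L_def that by simp
  have h0: "h 0 = 1"
    using \<mu>(4) prob_space.prob_space[OF \<mu>(1)] by simp
  have L0: "L 0 = 1"
    using L_def prob_space.prob_space[OF M] by simp
  have g0: "g n 0 = 1" if "n \<ge> 1" for n
  proof -
    have "is_laplace_transform (g n)" using g_LT that by simp
    then obtain \<nu> :: "real measure" where nu: "prob_space \<nu>" "\<forall>s\<ge>0. g n s = (\<integral>x. exp (- (s * x)) \<partial>\<nu>)"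
      unfolding is_laplace_transform_def by blast
    have "g n 0 = (\<integral>x. exp (- (0 * x)) \<partial>\<nu>)" using nu(2)[rule_format, of 0] by simp
    also have "\<dots> = 1" using prob_space.prob_space[OF nu(1)] by simp
    finally show ?thesis .
  qed
  have gpos: "0 < g n s" if "n \<ge> 1" "s \<ge> 0" for n s
    using bij_betwE[OF g_bij[rule_format, OF that(1)]] that by auto
  have glt: "g n s < 1" if "n \<ge> 1" "s > 0" for n s
    using g_decr[rule_format, OF that(1), of 0 s] that g0[OF that(1)] by simp
  have ginv: "the_inv_into {0..} (g n) (g n s) = s" if "n \<ge> 1" "s \<ge> 0" for n s
    by (rule the_inv_into_f_f) (use bij_betw_imp_inj_on[OF g_bij[rule_format, OF that(1)]] that in auto)
  define SH where "SH = (SUP s\<in>{0<..}. ereal (\<bar>h s - L s\<bar> / s powr a))"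
  have SHge: "ereal (\<bar>h s - L s\<bar> / s powr a) \<le> SH" if "s > 0" for s
    unfolding SH_def by (rule SUP_upper) (use that in auto)
  obtain C where C: "SH = ereal C"
    using SHge[of 1] h_close unfolding SH_def[symmetric] by (cases SH) auto
  have C0: "0 \<le> C" using SHge[of 1] C by simp
  have hC: "\<bar>h u - L u\<bar> \<le> C * u powr a" if "u \<ge> 0" for u
  proof (cases "u = 0")
    case True then show ?thesis using h0 L0 by simp
  next
    case False
    then have "0 < u powr a" using that by simp
    moreover have "\<bar>h u - L u\<bar> / u powr a \<le> C" using SHge[of u] C False that by simp
    ultimately show ?thesis by (simp add: divide_le_eq mult.commute)
  qed
  define D where "D = (\<lambda>n. SUP s\<in>{0<..}. ereal (real n * s powr a
                      / \<bar>the_inv_into {0..} (g n) (exp (- s))\<bar> powr a))"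
  have Dge: "ereal (real n * s powr a / \<bar>the_inv_into {0..} (g n) (exp (- s))\<bar> powr a) \<le> D n"
    if "s > 0" for n s
    unfolding D_def by (rule SUP_upper) (use that in auto)
  have Dlim: "D \<longlonglongrightarrow> ereal 0" using g_growth unfolding D_def zero_ereal_def .
  have evD: "eventually (\<lambda>n. D n < 1) sequentially"
    using order_tendstoD(2)[OF Dlim, of 1] by simp
  define r where "r = (\<lambda>n. real_of_ereal (D n))"
  have rlim: "r \<longlonglongrightarrow> 0" unfolding r_def using Dlim by simp
  have Dfin: "D n = ereal (r n)" if "D n < 1" for n
  proof -
    have "D n \<noteq> -\<infinity>" using Dge[of 1 n] by auto
    with that show ?thesis unfolding r_def by (cases "D n") auto
  qed
  have prodf: "(\<integral>\<omega>. exp (- (s * S n \<omega>)) \<partial>\<Omega> n) = h (- ln (g n s)) ^ n" if "n \<ge> 1" "s \<ge> 0" for n s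
  proof -
    interpret P: prob_space "\<Omega> n" using \<Omega>_prob that by simp
    have eq: "exp (- (s * S n \<omega>)) = (\<Prod>j\<in>{1..n}. exp (- (s * Xt n j \<omega>)))" for \<omega>
      unfolding S_def by (simp add: sum_distrib_left sum_negf[symmetric] exp_sum)
    have ind: "P.indep_vars (\<lambda>_. borel) (\<lambda>j \<omega>. exp (- (s * Xt n j \<omega>))) {1..n}"
      by (rule P.indep_vars_compose2[where X="Xt n" and Y="\<lambda>j x. exp (- (s * x))", OF Xt_indep[rule_format, OF that(1)]])
         auto
    have "(\<integral>\<omega>. exp (- (s * S n \<omega>)) \<partial>\<Omega> n) = (\<Prod>j\<in>{1..n}. \<integral>\<omega>. exp (- (s * Xt n j \<omega>)) \<partial>\<Omega> n)"
      unfolding eq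
      by (rule P.indep_vars_lebesgue_integral[OF _ ind])
         (use lt_int(1)[OF P.prob_space_axioms _ _ that(2)] Xt_meas Xt_nonneg that in auto)
    also have "\<dots> = (\<Prod>j\<in>{1..n}. h (- ln (g n s)))"
      using Xt_LT that by (intro prod.cong) auto
    finally show ?thesis by simp
  qed
  have lap: "(\<lambda>n. \<integral>\<omega>. exp (- (s * S n \<omega>)) \<partial>\<Omega> n) \<longlonglongrightarrow> L s" if s0: "s \<ge> 0" for s
  proof -
    have "(\<lambda>n. (\<integral>\<omega>. exp (- (s * S n \<omega>)) \<partial>\<Omega> n) - L s) \<longlonglongrightarrow> 0"
    proof (rule Lim_null_comparison)
      show "(\<lambda>n. C * s powr a * r n) \<longlonglongrightarrow> 0"
        using rlim by (intro tendsto_mult_right_zero)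
      have "eventually (\<lambda>n. n \<ge> 1 \<and> D n < 1) sequentially"
        using evD eventually_ge_at_top[of "1::nat"] by eventually_elim auto
      then show "eventually (\<lambda>n. norm ((\<integral>\<omega>. exp (- (s * S n \<omega>)) \<partial>\<Omega> n) - L s) \<le> C * s powr a * r n) sequentially"
      proof eventually_elim
        case (elim n)
        define u where "u = - ln (g n s)"
        have gp: "0 < g n s" using gpos elim s0 by simp
        have g1: "g n s \<le> 1"
          using s0 g0[of n] glt[of n s] elim by (cases "s = 0") auto
        have u0: "u \<ge> 0" unfolding u_def using gp g1 by simp
        have key: "real n * u powr a \<le> r n * s powr a"
        proof (cases "s = 0")
          case True
          then have "u = 0" unfolding u_def using g0 elim by simp
          then show ?thesis using True a_pos by simp
        next
          case False
          then have sp: "s > 0" using s0 by simp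
          have up: "u > 0" unfolding u_def using gp glt[OF _ sp] elim by simp
          have "exp (- u) = g n s" unfolding u_def using gp by simp
          then have "the_inv_into {0..} (g n) (exp (- u)) = s" using ginv elim s0 by simp
          then have "ereal (real n * u powr a / s powr a) \<le> D n" using Dge[OF up, of n] s0 by simp
          then have "real n * u powr a / s powr a \<le> r n" using Dfin[of n] elim by auto
          moreover have "s powr a > 0" using sp by simp
          ultimately show ?thesis by (simp add: divide_le_eq)
        qed
        have "norm ((\<integral>\<omega>. exp (- (s * S n \<omega>)) \<partial>\<Omega> n) - L s) = \<bar>h u ^ n - L u ^ n\<bar>"
          using prodf[of n s] L_stable[rule_format, of n s] elim s0 unfolding u_def by simp
        also have "\<dots> \<le> real n * \<bar>h u - L u\<bar>"
          using hb[OF u0] Lb[OF u0] by (intro pow_diff_le) auto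
        also have "\<dots> \<le> real n * (C * u powr a)"
          using hC[OF u0] by (intro mult_left_mono) auto
        also have "\<dots> = C * (real n * u powr a)" by simp
        also have "\<dots> \<le> C * (r n * s powr a)"
          using key C0 by (intro mult_left_mono) auto
        finally show ?case by (simp add: mult_ac)
      qed
    qed
    then show ?thesis by (simp add: Lim_null[symmetric])
  qed
  have W: "weak_conv_m (\<lambda>n. distr (\<Omega> (Suc n)) borel (S (Suc n))) (distr M borel Y)"
  proof (rule integral_cts_step_conv_imp_weak_conv)
    fix n show "real_distribution (distr (\<Omega> (Suc n)) borel (S (Suc n)))"
      using prob_space.real_distribution_distr[OF \<Omega>_prob[rule_format, of "Suc n"]] Smeas[of "Suc n"] by simp
  next
    show "real_distribution (distr M borel Y)"
      using prob_space.real_distribution_distr[OF M] Y_meas by simp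
  next
    fix x y :: real assume xy: "x < y"
    define \<phi> where "\<phi> = (\<lambda>z. cts_step x y (- ln (max z (exp (- y)))))"
    have cs: "continuous_on UNIV (cts_step x y)"
      using uniformly_continuous_imp_continuous[OF cts_step_uniformly_continuous[OF xy]] .
    have "continuous_on UNIV (\<lambda>z. - ln (max z (exp (- y))))"
      by (intro continuous_intros) (auto simp: max_def)
    then have phic: "continuous_on UNIV \<phi>"
      unfolding \<phi>_def by (rule continuous_on_compose2[OF cs]) auto
    have phib: "\<bar>\<phi> z\<bar> \<le> 1" for z
      unfolding \<phi>_def using cts_step_bounds[OF xy] by (simp add: abs_le_iff)
    have phie: "cts_step x y t = \<phi> (exp (- t))" for t
    proof -
      have "max (exp (- t)) (exp (- y)) = exp (- min t y)" by (auto simp: max_def min_def)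
      then show ?thesis unfolding \<phi>_def using cts_step_min[OF xy, of t] by simp
    qed
    have csm: "cts_step x y \<in> borel_measurable borel"
      using cs by (rule borel_measurable_continuous_onI)
    have i1: "integral\<^sup>L (distr (\<Omega> (Suc n)) borel (S (Suc n))) (cts_step x y)
        = (\<integral>\<omega>. \<phi> (exp (- S (Suc n) \<omega>)) \<partial>\<Omega> (Suc n))" for n
      by (subst integral_distr[OF Smeas csm]) (auto simp: phie)
    have i2: "integral\<^sup>L (distr M borel Y) (cts_step x y) = (\<integral>\<omega>. \<phi> (exp (- Y \<omega>)) \<partial>M)"
      by (subst integral_distr[OF Y_meas csm]) (auto simp: phie)
    show "(\<lambda>n. integral\<^sup>L (distr (\<Omega> (Suc n)) borel (S (Suc n))) (cts_step x y))
        \<longlonglongrightarrow> integral\<^sup>L (distr M borel Y) (cts_step x y)"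
      unfolding i1 i2
    proof (rule moment_conv[where B=1, OF _ M _ _ _ _ _ phic phib])
      fix n show "prob_space (\<Omega> (Suc n))" using \<Omega>_prob by simp
      show "(\<lambda>\<omega>. exp (- S (Suc n) \<omega>)) \<in> borel_measurable (\<Omega> (Suc n))"
        using Smeas[of "Suc n"] by simp
      show "AE \<omega> in \<Omega> (Suc n). exp (- S (Suc n) \<omega>) \<in> {0..1}"
        using Snn[of "Suc n", simplified] by eventually_elim simp
    next
      show "(\<lambda>\<omega>. exp (- Y \<omega>)) \<in> borel_measurable M" using Y_meas by simp
      show "AE \<omega> in M. exp (- Y \<omega>) \<in> {0..1}"
        using Y_nonneg by eventually_elim simp
    next
      fix k :: nat
      have e: "exp (- t) ^ k = exp (- (real k * t))" for t :: real
        by (simp add: exp_of_nat_mult[symmetric])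
      have "(\<lambda>n. \<integral>\<omega>. exp (- (real k * S (Suc n) \<omega>)) \<partial>\<Omega> (Suc n)) \<longlonglongrightarrow> L (real k)"
        using LIMSEQ_Suc[OF lap[of "real k"]] by simp
      then show "(\<lambda>n. \<integral>\<omega>. exp (- S (Suc n) \<omega>) ^ k \<partial>\<Omega> (Suc n)) \<longlonglongrightarrow> (\<integral>\<omega>. exp (- Y \<omega>) ^ k \<partial>M)"
        unfolding e using L_def by simp
    qed
  qed
  show ?thesis unfolding weak_conv_m_def weak_conv_def
  proof (intro allI impI)
    fix x assume "isCont (cdf (distr M borel Y)) x"
    then have "(\<lambda>n. cdf (distr (\<Omega> (Suc n)) borel (S (Suc n))) x) \<longlonglongrightarrow> cdf (distr M borel Y) x"
      using W unfolding weak_conv_m_def weak_conv_def by blast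
    then have "(\<lambda>n. cdf (distr (\<Omega> n) borel (S n)) x) \<longlonglongrightarrow> cdf (distr M borel Y) x"
      by (rule LIMSEQ_imp_Suc[where f="\<lambda>n. cdf (distr (\<Omega> n) borel (S n)) x"])
    then show "(\<lambda>n. cdf (distr (\<Omega> n) borel (\<lambda>\<omega>. \<Sum>j\<in>{1..n}. Xt n j \<omega>)) x) \<longlonglongrightarrow> cdf (distr M borel Y) x"
      unfolding S_def .
  qed
qed

end
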